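(* Let $f:F\to F'$ be a morphism of hyperfields, where $F$ is a topological hyperfield. Let $*\in\{s,w\}$ and $M\in\operatorname{Gr}^*(r,F'^n)$. Then the identity maps $$\operatorname{Real}^*_{{}_0F}(M)\to\operatorname{Real}^*_F(M)\to\operatorname{Real}^*_{F_0}(M)$$ are homeomorphisms.
   Context: Hyperfields. A hyperfield $(F,\odot,\boxplus,1,0)$ has the following data and axioms. - $\odot$ is a commutative multiplication and $\boxplus$ is a hyperaddition assigning to each $x,y$ a nonempty subset $x\boxplus y\subseteq F$ (extended to subsets by unions). - $\boxplus$ is commutative and associative, and $x\boxplus 0=\{x\}$. - Each $x$ has a unique $-x$ with $0\in x\boxplus(-x)$, and $x\in y\boxplus z \iff z\in x\boxplus(-y)$. - $(F\setminus\{0\},\odot,1)$ is an abelian group $F^\times$, $0\odot x=0$, and $x\odot(y\boxplus z)=(x\odot y)\boxplus(x\odot z)$. A homomorphism (morphism) $h$ satisfies $h(0)=0$, $h(1)=1$, $h(xy)=h(x)h(y)$ and $h(x\boxplus y)\subseteq h(x)\boxplus h(y)$. Topological hyperfields. A topological hyperfield is a hyperfield with a topology $T$ in which $F\setminus\{0\}$ is open, multiplication is continuous, and inversion on $F^\times$ is continuous. - ${}_0F$ is $F$ with the 0-fine topology: $V\subseteq F$ is open iff $V\setminus\{0\}\in T$. - $F_0$ is $F$ with the 0-coarse topology: the open sets are $F$ and all $U\in T$ with $0\notin U$. Grassmannians. A strong Grassmann–Plücker (GP) function of rank $r$ on $E=\{1,\dots,n\}$ is a function $\varphi:E^r\to F$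 with the following properties. - $\varphi$ is not identically $0$. - $\varphi$ is alternating. - For all $(i_1,\dots,i_{r+1})\in E^{r+1}$ and $(j_1,\dots,j_{r-1})\in E^{r-1}$: $$0\in\boxplus_{k=1}^{r+1}(-1)^k\varphi(i_1,\dots,\widehat{i_k},\dots,i_{r+1})\odot\varphi(i_k,j_1,\dots,j_{r-1}).$$ A weak GP function is a function $\varphi:E^r\to F$ with the following properties. - $\varphi$ is nonzero and alternating. - Its support is the set of bases of a matroid. - The relation holds whenever $|\{i\}\setminus\{j\}|=3$. $\operatorname{Gr}^s(r,F^n)$ and $\operatorname{Gr}^w(r,F^n)$ are the sets of classes of strong, resp. weak, GP functions modulo $\varphi\sim\alpha\varphi$, $\alpha\in F^\times$. For topological $F$ they have the subspace topology of $(F^{E^r}\setminus\{0\})/F^\times$, which carries the product and quotient topologies. Realization spaces. A morphism $f$ induces $\operatorname{Gr}^*(f):[\varphi]\mapsto[f\circ\varphi]$. For $M\in\operatorname{Gr}^*(r,F'^n)$, the realization space $\operatorname{Real}^*_F(M)=\operatorname{Gr}^*(f)^{-1}(M)\subseteq\operatorname{Gr}^*(r,F^n)$ has the subspace topology; the subscript indicates which topology on $F$ is used. *)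

theory Defs
  imports "HOL-Analysis.Analysis" "HOL-Combinatorics.Permutations"
begin

text \<open>A hyperfield whose underlying set is the whole type 'a.\<close>
record 'a hstruct =
  hmul :: "'a \<Rightarrow> 'a \<Rightarrow> 'a"
  hadd :: "'a \<Rightarrow> 'a \<Rightarrow> 'a set"
  hone :: 'a
  hzero :: 'a

definition hsadd :: "'a hstruct \<Rightarrow> 'a set \<Rightarrow> 'a set \<Rightarrow> 'a set" where
  "hsadd F A B = (\<Union>a\<in>A. \<Union>b\<in>B. hadd F a b)"

definition hneg :: "'a hstruct \<Rightarrow> 'a \<Rightarrow> 'a" where
  "hneg F x = (THE y. hzero F \<in> hadd F x y)"

definition hinv :: "'a hstruct \<Rightarrow> 'a \<Rightarrow> 'a" where
  "hinv F x = (THE y. hmul F x y = hone F)"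

definition hyperfield :: "'a hstruct \<Rightarrow> bool" where
  "hyperfield F \<longleftrightarrow>
     (\<forall>x y. hadd F x y \<noteq> {}) \<and>
     (\<forall>x y. hadd F x y = hadd F y x) \<and>
     (\<forall>x y z. hsadd F (hadd F x y) {z} = hsadd F {x} (hadd F y z)) \<and>
     (\<forall>x. hadd F x (hzero F) = {x}) \<and>
     (\<forall>x. \<exists>!y. hzero F \<in> hadd F x y) \<and>
     (\<forall>x y z. x \<in> hadd F y z \<longleftrightarrow> z \<in> hadd F x (hneg F y)) \<and>
     (\<forall>x y. hmul F x y = hmul F y x) \<and>
     (\<forall>x y z. hmul F (hmul F x y) z = hmul F x (hmul F y z)) \<and>
     hone F \<noteq> hzero F \<and>
     (\<forall>x y. x \<noteq> hzero F \<longrightarrow> y \<noteq> hzero F \<longrightarrow> hmul F x y \<noteq> hzero F) \<and>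
     (\<forall>x. hmul F (hone F) x = x) \<and>
     (\<forall>x. x \<noteq> hzero F \<longrightarrow> (\<exists>y. hmul F x y = hone F)) \<and>
     (\<forall>x. hmul F (hzero F) x = hzero F) \<and>
     (\<forall>x y z. hmul F x ` hadd F y z = hadd F (hmul F x y) (hmul F x z))"

definition hmorphism :: "'a hstruct \<Rightarrow> 'b hstruct \<Rightarrow> ('a \<Rightarrow> 'b) \<Rightarrow> bool" where
  "hmorphism F F' h \<longleftrightarrow>
     h (hzero F) = hzero F' \<and> h (hone F) = hone F' \<and>
     (\<forall>x y. h (hmul F x y) = hmul F' (h x) (h y)) \<and>
     (\<forall>x y. h ` hadd F x y \<subseteq> hadd F' (h x) (h y))"

definition top_hyperfield :: "'a hstruct \<Rightarrow> 'a topology \<Rightarrow> bool" where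
  "top_hyperfield F T \<longleftrightarrow>
     hyperfield F \<and> topspace T = UNIV \<and> openin T (- {hzero F}) \<and>
     continuous_map (prod_topology T T) T (\<lambda>(x, y). hmul F x y) \<and>
     continuous_map (subtopology T (- {hzero F})) (subtopology T (- {hzero F})) (hinv F)"

definition zero_fine :: "'a hstruct \<Rightarrow> 'a topology \<Rightarrow> 'a topology" where
  "zero_fine F T = topology (\<lambda>V. openin T (V - {hzero F}))"

definition zero_coarse :: "'a hstruct \<Rightarrow> 'a topology \<Rightarrow> 'a topology" where
  "zero_coarse F T = topology (\<lambda>U. U = UNIV \<or> (openin T U \<and> hzero F \<notin> U))"

text \<open>E^r with E = {1..n}, represented by lists of length r.\<close>
definition tuples :: "nat \<Rightarrow> nat \<Rightarrow> nat list set" where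
  "tuples n r = {xs. length xs = r \<and> set xs \<subseteq> {1..n}}"

definition hsgn :: "'a hstruct \<Rightarrow> (nat \<Rightarrow> nat) \<Rightarrow> 'a \<Rightarrow> 'a" where
  "hsgn F \<sigma> x = (if evenperm \<sigma> then x else hneg F x)"

definition alternating :: "'a hstruct \<Rightarrow> nat \<Rightarrow> nat \<Rightarrow> (nat list \<Rightarrow> 'a) \<Rightarrow> bool" where
  "alternating F n r \<phi> \<longleftrightarrow>
     (\<forall>i\<in>tuples n r.
        (\<forall>\<sigma>. \<sigma> permutes {..<r} \<longrightarrow> \<phi> (map (\<lambda>k. i ! \<sigma> k) [0..<r]) = hsgn F \<sigma> (\<phi> i)) \<and>
        (\<forall>a<r. \<forall>b<r. a \<noteq> b \<and> i ! a = i ! b \<longrightarrow> \<phi> i = hzero F))"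

fun hsum :: "'a hstruct \<Rightarrow> 'a list \<Rightarrow> 'a set" where
  "hsum F [] = {hzero F}"
| "hsum F (x # xs) = hsadd F {x} (hsum F xs)"

definition hsignpow :: "'a hstruct \<Rightarrow> nat \<Rightarrow> 'a \<Rightarrow> 'a" where
  "hsignpow F k x = (if even k then x else hneg F x)"

text \<open>The GP relation for i = (i_1..i_{r+1}) and j = (j_1..j_{r-1}), k = 1..r+1.\<close>
definition gp_rel :: "'a hstruct \<Rightarrow> nat \<Rightarrow> (nat list \<Rightarrow> 'a) \<Rightarrow> nat list \<Rightarrow> nat list \<Rightarrow> bool" where
  "gp_rel F r \<phi> i j \<longleftrightarrow>
     hzero F \<in> hsum F (map (\<lambda>k. hsignpow F k
        (hmul F (\<phi> (take (k - 1) i @ drop k i)) (\<phi> ((i ! (k - 1)) # j)))) [1..<r + 2])"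

definition nonzero_fun :: "'a hstruct \<Rightarrow> nat \<Rightarrow> nat \<Rightarrow> (nat list \<Rightarrow> 'a) \<Rightarrow> bool" where
  "nonzero_fun F n r \<phi> \<longleftrightarrow> (\<exists>i\<in>tuples n r. \<phi> i \<noteq> hzero F)"

definition matroid_bases :: "'e set \<Rightarrow> 'e set set \<Rightarrow> bool" where
  "matroid_bases E B \<longleftrightarrow> B \<noteq> {} \<and> (\<forall>b\<in>B. b \<subseteq> E) \<and>
     (\<forall>B1\<in>B. \<forall>B2\<in>B. \<forall>x\<in>B1 - B2. \<exists>y\<in>B2 - B1. insert y (B1 - {x}) \<in> B)"

definition strong_gp :: "'a hstruct \<Rightarrow> nat \<Rightarrow> nat \<Rightarrow> (nat list \<Rightarrow> 'a) \<Rightarrow> bool" where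
  "strong_gp F n r \<phi> \<longleftrightarrow>
     \<phi> \<in> extensional (tuples n r) \<and> nonzero_fun F n r \<phi> \<and> alternating F n r \<phi> \<and>
     (0 < r \<longrightarrow> (\<forall>i\<in>tuples n (r + 1). \<forall>j\<in>tuples n (r - 1). gp_rel F r \<phi> i j))"

definition weak_gp :: "'a hstruct \<Rightarrow> nat \<Rightarrow> nat \<Rightarrow> (nat list \<Rightarrow> 'a) \<Rightarrow> bool" where
  "weak_gp F n r \<phi> \<longleftrightarrow>
     \<phi> \<in> extensional (tuples n r) \<and> nonzero_fun F n r \<phi> \<and> alternating F n r \<phi> \<and>
     matroid_bases {1..n} {set i | i. i \<in> tuples n r \<and> \<phi> i \<noteq> hzero F} \<and>
     (0 < r \<longrightarrow> (\<forall>i\<in>tuples n (r + 1). \<forall>j\<in>tuples n (r - 1).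
        card (set i - set j) = 3 \<longrightarrow> gp_rel F r \<phi> i j))"

datatype gp_kind = Strong | Weak

definition is_gp :: "gp_kind \<Rightarrow> 'a hstruct \<Rightarrow> nat \<Rightarrow> nat \<Rightarrow> (nat list \<Rightarrow> 'a) \<Rightarrow> bool" where
  "is_gp k F n r \<phi> = (case k of Strong \<Rightarrow> strong_gp F n r \<phi> | Weak \<Rightarrow> weak_gp F n r \<phi>)"

definition gp_class :: "'a hstruct \<Rightarrow> nat \<Rightarrow> nat \<Rightarrow> (nat list \<Rightarrow> 'a) \<Rightarrow> (nat list \<Rightarrow> 'a) set" where
  "gp_class F n r \<phi> = {restrict (\<lambda>i. hmul F \<alpha> (\<phi> i)) (tuples n r) | \<alpha>. \<alpha> \<noteq> hzero F}"

definition Gr :: "gp_kind \<Rightarrow> 'a hstruct \<Rightarrow> nat \<Rightarrow> nat \<Rightarrow> (nat list \<Rightarrow> 'a) set set" where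
  "Gr k F n r = gp_class F n r ` {\<phi>. is_gp k F n r \<phi>}"

definition nzvecs :: "'a hstruct \<Rightarrow> nat \<Rightarrow> nat \<Rightarrow> (nat list \<Rightarrow> 'a) set" where
  "nzvecs F n r = (tuples n r \<rightarrow>\<^sub>E UNIV) - {restrict (\<lambda>_. hzero F) (tuples n r)}"

definition nzvec_top :: "'a hstruct \<Rightarrow> 'a topology \<Rightarrow> nat \<Rightarrow> nat \<Rightarrow> (nat list \<Rightarrow> 'a) topology" where
  "nzvec_top F T n r = subtopology (product_topology (\<lambda>_. T) (tuples n r)) (nzvecs F n r)"

definition proj_top :: "'a hstruct \<Rightarrow> 'a topology \<Rightarrow> nat \<Rightarrow> nat \<Rightarrow> (nat list \<Rightarrow> 'a) set topology" where
  "proj_top F T n r = topology (\<lambda>U. U \<subseteq> gp_class F n r ` nzvecs F n r \<and>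
      openin (nzvec_top F T n r) {\<phi> \<in> nzvecs F n r. gp_class F n r \<phi> \<in> U})"

definition Gr_top :: "gp_kind \<Rightarrow> 'a hstruct \<Rightarrow> 'a topology \<Rightarrow> nat \<Rightarrow> nat \<Rightarrow> (nat list \<Rightarrow> 'a) set topology" where
  "Gr_top k F T n r = subtopology (proj_top F T n r) (Gr k F n r)"

text \<open>Gr(f): [\<phi>] \<mapsto> [f o \<phi>]; Real(M) = Gr(f)^{-1}(M).\<close>
definition Real_set :: "gp_kind \<Rightarrow> 'a hstruct \<Rightarrow> 'b hstruct \<Rightarrow> ('a \<Rightarrow> 'b) \<Rightarrow> nat \<Rightarrow> nat
    \<Rightarrow> (nat list \<Rightarrow> 'b) set \<Rightarrow> (nat list \<Rightarrow> 'a) set set" where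
  "Real_set k F F' f n r M =
     {C \<in> Gr k F n r. \<exists>\<phi>\<in>C. gp_class F' n r (restrict (f \<circ> \<phi>) (tuples n r)) = M}"

definition Real_top :: "gp_kind \<Rightarrow> 'a hstruct \<Rightarrow> 'a topology \<Rightarrow> 'b hstruct \<Rightarrow> ('a \<Rightarrow> 'b) \<Rightarrow> nat \<Rightarrow> nat
    \<Rightarrow> (nat list \<Rightarrow> 'b) set \<Rightarrow> (nat list \<Rightarrow> 'a) set topology" where
  "Real_top k F T F' f n r M = subtopology (Gr_top k F T n r) (Real_set k F F' f n r M)"

end

theory Submission
  imports Defs
begin



lemma hf_parts:
  assumes "hyperfield F"
  shows hf_comm0: "\<forall>x y. hmul F x y = hmul F y x"
    and hf_assoc0: "\<forall>x y z. hmul F (hmul F x y) z = hmul F x (hmul F y z)"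
    and hf_onez: "hone F \<noteq> hzero F"
    and hf_nz0: "\<forall>x y. x \<noteq> hzero F \<longrightarrow> y \<noteq> hzero F \<longrightarrow> hmul F x y \<noteq> hzero F"
    and hf_one0: "\<forall>x. hmul F (hone F) x = x"
    and hf_inv0: "\<forall>x. x \<noteq> hzero F \<longrightarrow> (\<exists>y. hmul F x y = hone F)"
    and hf_zl0: "\<forall>x. hmul F (hzero F) x = hzero F"
  using assms unfolding hyperfield_def apply -
  apply (elim conjE, assumption)+
  done

lemma hf_mul_zero_left: "hyperfield F \<Longrightarrow> hmul F (hzero F) x = hzero F"
  using hf_zl0 by blast

lemma hf_comm: "hyperfield F \<Longrightarrow> hmul F x y = hmul F y x"
  using hf_comm0 by blast

lemma hf_mul_zero_right: "hyperfield F \<Longrightarrow> hmul F x (hzero F) = hzero F"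
  using hf_comm[of F x "hzero F"] hf_mul_zero_left[of F x] by simp

lemma hf_mul_nz: "hyperfield F \<Longrightarrow> x \<noteq> hzero F \<Longrightarrow> y \<noteq> hzero F \<Longrightarrow> hmul F x y \<noteq> hzero F"
  using hf_nz0 by blast

lemma hf_one: "hyperfield F \<Longrightarrow> hmul F (hone F) x = x"
  using hf_one0 by blast

lemma hf_assoc: "hyperfield F \<Longrightarrow> hmul F (hmul F x y) z = hmul F x (hmul F y z)"
  using hf_assoc0 by blast

lemma hf_inv: "hyperfield F \<Longrightarrow> x \<noteq> hzero F \<Longrightarrow> \<exists>y. y \<noteq> hzero F \<and> hmul F y x = hone F"
proof -
  assume hf: "hyperfield F" and x: "x \<noteq> hzero F"
  obtain y where y: "hmul F x y = hone F" using hf_inv0[OF hf] x by blast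
  then have "hmul F y x = hone F" using hf_comm[OF hf] by simp
  moreover have "y \<noteq> hzero F" using y hf_mul_zero_left[OF hf, of x] hf_comm[OF hf, of x] hf_onez[OF hf] by auto
  ultimately show ?thesis by blast
qed

lemma morph_nz:
  assumes "hyperfield F" "hyperfield F'" "hmorphism F F' f" "x \<noteq> hzero F"
  shows "f x \<noteq> hzero F'"
proof
  assume h: "f x = hzero F'"
  obtain y where "hmul F y x = hone F" using hf_inv[OF assms(1,4)] by blast
  moreover have "\<forall>x y. f (hmul F x y) = hmul F' (f x) (f y)" "f (hone F) = hone F'"
    using assms(3) unfolding hmorphism_def by blast+
  ultimately have "hmul F' (f y) (f x) = hone F'" by metis
  then show False using h hf_mul_zero_right[OF assms(2), of "f y"] hf_onez[OF assms(2)] by simp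
qed

definition scl :: "'a hstruct \<Rightarrow> nat \<Rightarrow> nat \<Rightarrow> 'a \<Rightarrow> (nat list \<Rightarrow> 'a) \<Rightarrow> (nat list \<Rightarrow> 'a)" where
  "scl F n r a \<phi> = restrict (\<lambda>i. hmul F a (\<phi> i)) (tuples n r)"

lemma gp_class_scl: "gp_class F n r \<phi> = {scl F n r a \<phi> | a. a \<noteq> hzero F}"
  unfolding gp_class_def scl_def by simp

lemma scl_scl: "hyperfield F \<Longrightarrow> scl F n r a (scl F n r b \<phi>) = scl F n r (hmul F a b) \<phi>"
  unfolding scl_def by (auto simp: hf_assoc)

lemma scl_one: "hyperfield F \<Longrightarrow> \<phi> \<in> extensional (tuples n r) \<Longrightarrow> scl F n r (hone F) \<phi> = \<phi>"
  unfolding scl_def by (auto simp: hf_one extensional_def)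

lemma self_in_class:
  assumes hf: "hyperfield F" and e: "\<phi> \<in> extensional (tuples n r)"
  shows "\<phi> \<in> gp_class F n r \<phi>"
proof -
  have "\<phi> = scl F n r (hone F) \<phi>" using scl_one[OF hf e] by simp
  then show ?thesis using hf_onez[OF hf] unfolding gp_class_scl by blast
qed

lemma class_scl: assumes "hyperfield F" "a \<noteq> hzero F"
  shows "gp_class F n r (scl F n r a \<phi>) = gp_class F n r \<phi>"
proof -
  obtain b where b: "b \<noteq> hzero F" "hmul F b a = hone F" using hf_inv[OF assms] by blast
  show ?thesis
  proof (auto simp: gp_class_scl scl_scl[OF assms(1)])
    fix c assume "c \<noteq> hzero F"
    then show "\<exists>d. scl F n r (hmul F c a) \<phi> = scl F n r d \<phi> \<and> d \<noteq> hzero F"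
      using hf_mul_nz[OF assms(1) _ assms(2)] by blast
  next
    fix c assume c: "c \<noteq> hzero F"
    have "scl F n r c \<phi> = scl F n r (hmul F (hmul F c b) a) \<phi>"
    proof -
      have "hmul F (hmul F c b) a = hmul F c (hmul F b a)" by (rule hf_assoc[OF assms(1)])
      also have "\<dots> = c" using b(2) hf_comm[OF assms(1), of c "hone F"] hf_one[OF assms(1)] by simp
      finally show ?thesis by (simp only:)
    qed
    then show "\<exists>d. scl F n r c \<phi> = scl F n r (hmul F d a) \<phi> \<and> d \<noteq> hzero F"
      using hf_mul_nz[OF assms(1) c b(1)] by blast
  qed
qed

lemma class_eq_iff:
  assumes "hyperfield F" "\<psi> \<in> extensional (tuples n r)"
  shows "gp_class F n r \<phi> = gp_class F n r \<psi> \<longleftrightarrow> (\<exists>a. a \<noteq> hzero F \<and> \<psi> = scl F n r a \<phi>)"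
proof
  assume "gp_class F n r \<phi> = gp_class F n r \<psi>"
  then have "\<psi> \<in> gp_class F n r \<phi>" using self_in_class[OF assms] by simp
  then show "\<exists>a. a \<noteq> hzero F \<and> \<psi> = scl F n r a \<phi>" unfolding gp_class_scl by blast
next
  assume "\<exists>a. a \<noteq> hzero F \<and> \<psi> = scl F n r a \<phi>"
  then show "gp_class F n r \<phi> = gp_class F n r \<psi>" using class_scl[OF assms(1)] by auto
qed




lemma openin_zero_fine: "openin (zero_fine F T) V \<longleftrightarrow> openin T (V - {hzero F})"
proof -
  have "istopology (\<lambda>V. openin T (V - {hzero F}))"
    unfolding istopology_def
  proof (intro conjI allI impI)
    fix S U assume "openin T (S - {hzero F})" "openin T (U - {hzero F})"
    then have "openin T ((S - {hzero F}) \<inter> (U - {hzero F}))" by blast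
    moreover have "(S - {hzero F}) \<inter> (U - {hzero F}) = S \<inter> U - {hzero F}" by blast
    ultimately show "openin T (S \<inter> U - {hzero F})" by simp
  next
    fix K assume "\<forall>S\<in>K. openin T (S - {hzero F})"
    then have "openin T (\<Union> ((\<lambda>S. S - {hzero F}) ` K))" by blast
    moreover have "\<Union> ((\<lambda>S. S - {hzero F}) ` K) = \<Union> K - {hzero F}" by blast
    ultimately show "openin T (\<Union> K - {hzero F})" by simp
  qed
  then show ?thesis unfolding zero_fine_def by simp
qed

lemma openin_zero_coarse: "openin (zero_coarse F T) U \<longleftrightarrow> U = UNIV \<or> (openin T U \<and> hzero F \<notin> U)"
proof -
  have "istopology (\<lambda>U. U = UNIV \<or> (openin T U \<and> hzero F \<notin> U))"
    unfolding istopology_def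
  proof (intro conjI allI impI)
    fix S U assume "S = UNIV \<or> (openin T S \<and> hzero F \<notin> S)" "U = UNIV \<or> (openin T U \<and> hzero F \<notin> U)"
    then show "S \<inter> U = UNIV \<or> (openin T (S \<inter> U) \<and> hzero F \<notin> S \<inter> U)" by auto
  next
    fix K assume K: "\<forall>S\<in>K. S = UNIV \<or> (openin T S \<and> hzero F \<notin> S)"
    show "\<Union> K = UNIV \<or> (openin T (\<Union> K) \<and> hzero F \<notin> \<Union> K)"
    proof (cases "UNIV \<in> K")
      case True then show ?thesis by blast
    next
      case False then show ?thesis using K by auto
    qed
  qed
  then show ?thesis unfolding zero_coarse_def by simp
qed

lemma openin_proj_top:
  "openin (proj_top F T n r) U \<longleftrightarrow> U \<subseteq> gp_class F n r ` nzvecs F n r \<and>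
      openin (nzvec_top F T n r) {\<phi> \<in> nzvecs F n r. gp_class F n r \<phi> \<in> U}"
proof -
  let ?N = "nzvecs F n r" and ?q = "gp_class F n r" and ?X = "nzvec_top F T n r"
  have "istopology (\<lambda>U. U \<subseteq> ?q ` ?N \<and> openin ?X {\<phi> \<in> ?N. ?q \<phi> \<in> U})"
    unfolding istopology_def
  proof (rule conjI; intro allI impI)
    fix S U assume a: "S \<subseteq> ?q ` ?N \<and> openin ?X {\<phi> \<in> ?N. ?q \<phi> \<in> S}" "U \<subseteq> ?q ` ?N \<and> openin ?X {\<phi> \<in> ?N. ?q \<phi> \<in> U}"
    then have "openin ?X ({\<phi> \<in> ?N. ?q \<phi> \<in> S} \<inter> {\<phi> \<in> ?N. ?q \<phi> \<in> U})" by blast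
    moreover have "{\<phi> \<in> ?N. ?q \<phi> \<in> S} \<inter> {\<phi> \<in> ?N. ?q \<phi> \<in> U} = {\<phi> \<in> ?N. ?q \<phi> \<in> S \<inter> U}" by blast
    ultimately show "S \<inter> U \<subseteq> ?q ` ?N \<and> openin ?X {\<phi> \<in> ?N. ?q \<phi> \<in> S \<inter> U}" using a by auto
  next
    fix K assume K: "\<forall>S\<in>K. S \<subseteq> ?q ` ?N \<and> openin ?X {\<phi> \<in> ?N. ?q \<phi> \<in> S}"
    then have "openin ?X (\<Union> ((\<lambda>S. {\<phi> \<in> ?N. ?q \<phi> \<in> S}) ` K))" by blast
    moreover have "\<Union> ((\<lambda>S. {\<phi> \<in> ?N. ?q \<phi> \<in> S}) ` K) = {\<phi> \<in> ?N. ?q \<phi> \<in> \<Union> K}" by blast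
    ultimately show "\<Union> K \<subseteq> ?q ` ?N \<and> openin ?X {\<phi> \<in> ?N. ?q \<phi> \<in> \<Union> K}" using K by auto
  qed
  then show ?thesis unfolding proj_top_def by simp
qed




lemma nzvecs_iff: "\<phi> \<in> nzvecs F n r \<longleftrightarrow> \<phi> \<in> extensional (tuples n r) \<and> (\<exists>i\<in>tuples n r. \<phi> i \<noteq> hzero F)"
proof -
  have e: "\<phi> \<in> (tuples n r \<rightarrow>\<^sub>E UNIV) \<longleftrightarrow> \<phi> \<in> extensional (tuples n r)" by (simp add: PiE_iff)
  have "\<phi> \<in> extensional (tuples n r) \<Longrightarrow> \<phi> = restrict (\<lambda>_. hzero F) (tuples n r) \<longleftrightarrow> (\<forall>i\<in>tuples n r. \<phi> i = hzero F)"
    by (metis extensional_restrict restrict_apply' restrict_ext)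
  then show ?thesis unfolding nzvecs_def using e by blast
qed

lemma scl_nzvecs: "hyperfield F \<Longrightarrow> a \<noteq> hzero F \<Longrightarrow> \<phi> \<in> nzvecs F n r \<Longrightarrow> scl F n r a \<phi> \<in> nzvecs F n r"
  unfolding nzvecs_iff scl_def using hf_mul_nz by (metis restrict_apply' restrict_extensional)

lemma topspace_nzvec: "topspace X = UNIV \<Longrightarrow> topspace (nzvec_top F X n r) = nzvecs F n r"
  unfolding nzvec_top_def nzvecs_def by (auto simp: topspace_product_topology)
lemma scl_cont:
  assumes hf: "hyperfield F" and tX: "topspace X = UNIV"
    and c: "continuous_map X X (hmul F a)" and a: "a \<noteq> hzero F"
  shows "continuous_map (nzvec_top F X n r) (nzvec_top F X n r) (scl F n r a)"
proof -
  have "continuous_map (product_topology (\<lambda>_. X) (tuples n r)) (product_topology (\<lambda>_. X) (tuples n r)) (scl F n r a)"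
    unfolding continuous_map_componentwise
  proof (intro conjI ballI)
    show "scl F n r a ` topspace (product_topology (\<lambda>_. X) (tuples n r)) \<subseteq> extensional (tuples n r)"
      unfolding scl_def by auto
  next
    fix k assume k: "k \<in> tuples n r"
    have "(\<lambda>x. scl F n r a x k) = hmul F a \<circ> (\<lambda>x. x k)" using k unfolding scl_def by auto
    then show "continuous_map (product_topology (\<lambda>_. X) (tuples n r)) X (\<lambda>x. scl F n r a x k)"
      using continuous_map_compose[OF continuous_map_product_projection[OF k] c] by simp
  qed
  then show ?thesis unfolding nzvec_top_def
    by (intro continuous_map_into_subtopology continuous_map_from_subtopology)
      (auto simp: topspace_product_topology tX scl_nzvecs[OF hf a])
qed

lemma scl_open:
  assumes hf: "hyperfield F" and tX: "topspace X = UNIV"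
    and c: "\<forall>a. a \<noteq> hzero F \<longrightarrow> continuous_map X X (hmul F a)" and a: "a \<noteq> hzero F"
    and V: "openin (nzvec_top F X n r) V"
  shows "openin (nzvec_top F X n r) (scl F n r a ` V)"
proof -
  obtain b where b: "b \<noteq> hzero F" "hmul F b a = hone F" using hf_inv[OF hf a] by blast
  have ba: "hmul F a b = hone F" using b hf_comm[OF hf] by metis
  have VN: "V \<subseteq> nzvecs F n r" using openin_subset[OF V] topspace_nzvec[OF tX] by simp
  have "scl F n r a ` V = {x \<in> topspace (nzvec_top F X n r). scl F n r b x \<in> V}"
  proof (auto simp: topspace_nzvec[OF tX])
    fix x assume "x \<in> V"
    then show "scl F n r a x \<in> nzvecs F n r" using VN scl_nzvecs[OF hf a] by blast
    show "scl F n r b (scl F n r a x) \<in> V" using \<open>x \<in> V\<close> VN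
    proof -
      have "x \<in> extensional (tuples n r)" using \<open>x \<in> V\<close> VN nzvecs_iff by blast
      then have "scl F n r b (scl F n r a x) = x" by (simp add: scl_scl[OF hf] b(2) scl_one[OF hf])
      then show ?thesis using \<open>x \<in> V\<close> by simp
    qed
  next
    fix x assume "x \<in> nzvecs F n r" "scl F n r b x \<in> V"
    then have "x = scl F n r a (scl F n r b x)"
      by (simp add: scl_scl[OF hf] ba scl_one[OF hf] nzvecs_iff)
    then show "x \<in> scl F n r a ` V" using \<open>scl F n r b x \<in> V\<close> by blast
  qed
  then show ?thesis
    using openin_continuous_map_preimage[OF scl_cont[OF hf tX _ b(1)] V] c b(1) by simp
qed




lemma Gr_sub: "Gr k F n r \<subseteq> gp_class F n r ` nzvecs F n r"
proof
  fix C assume "C \<in> Gr k F n r"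
  then obtain \<phi> where C: "C = gp_class F n r \<phi>" and g: "is_gp k F n r \<phi>" unfolding Gr_def by blast
  have "\<phi> \<in> extensional (tuples n r) \<and> nonzero_fun F n r \<phi>"
    using g by (cases k) (auto simp: is_gp_def strong_gp_def weak_gp_def)
  then have "\<phi> \<in> nzvecs F n r" by (simp add: nzvecs_iff nonzero_fun_def)
  then show "C \<in> gp_class F n r ` nzvecs F n r" using C by blast
qed

lemma Real_sub: "Real_set k F F' f n r M \<subseteq> gp_class F n r ` nzvecs F n r"
  using Gr_sub unfolding Real_set_def by blast

lemma Real_top_eq: "Real_top k F X F' f n r M = subtopology (proj_top F X n r) (Real_set k F F' f n r M)"
proof -
  have "Gr k F n r \<inter> Real_set k F F' f n r M = Real_set k F F' f n r M" unfolding Real_set_def by blast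
  then show ?thesis unfolding Real_top_def Gr_top_def subtopology_subtopology by simp
qed

lemma open_Real:
  fixes F :: "'a hstruct" and F' :: "'b hstruct" and k f n r M X W
  assumes hf: "hyperfield F" and tX: "topspace X = UNIV"
    and c: "\<forall>a. a \<noteq> hzero F \<longrightarrow> continuous_map X X (hmul F a)"
  defines "R \<equiv> Real_set k F F' f n r M"
  defines "q \<equiv> gp_class F n r"
  defines "N \<equiv> nzvecs F n r"
  defines "A \<equiv> {\<phi> \<in> N. q \<phi> \<in> R}"
  shows "openin (Real_top k F X F' f n r M) W \<longleftrightarrow>
      W \<subseteq> R \<and> openin (subtopology (product_topology (\<lambda>_. X) (tuples n r)) A) {\<phi> \<in> A. q \<phi> \<in> W}"
proof
  let ?P = "product_topology (\<lambda>_. X) (tuples n r)"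
  have AN: "A \<subseteq> N" unfolding A_def by blast
  assume "openin (Real_top k F X F' f n r M) W"
  then obtain U where U: "openin (proj_top F X n r) U" and W: "W = U \<inter> R"
    unfolding Real_top_eq R_def openin_subtopology by blast
  have "openin (nzvec_top F X n r) {\<phi> \<in> N. q \<phi> \<in> U}" using U openin_proj_top unfolding q_def N_def by blast
  then obtain T where T: "openin ?P T" and TT: "{\<phi> \<in> N. q \<phi> \<in> U} = T \<inter> N"
    unfolding nzvec_top_def openin_subtopology N_def by blast
  have "{\<phi> \<in> A. q \<phi> \<in> W} = T \<inter> A" using TT AN W unfolding A_def by blast
  then have "openin (subtopology ?P A) {\<phi> \<in> A. q \<phi> \<in> W}" using T openin_subtopology by blast
  then show "W \<subseteq> R \<and> openin (subtopology ?P A) {\<phi> \<in> A. q \<phi> \<in> W}" using W by blast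
next
  let ?P = "product_topology (\<lambda>_. X) (tuples n r)"
  assume "W \<subseteq> R \<and> openin (subtopology ?P A) {\<phi> \<in> A. q \<phi> \<in> W}"
  then have WR: "W \<subseteq> R" and "openin (subtopology ?P A) {\<phi> \<in> A. q \<phi> \<in> W}" by auto
  then obtain T where T: "openin ?P T" and TT: "{\<phi> \<in> A. q \<phi> \<in> W} = T \<inter> A"
    unfolding openin_subtopology by blast
  define V where "V = T \<inter> N"
  have V: "openin (nzvec_top F X n r) V" unfolding V_def nzvec_top_def N_def
    using T openin_subtopology by blast
  have VN: "V \<subseteq> N" unfolding V_def by blast
  have pre: "{\<phi> \<in> N. q \<phi> \<in> q ` V} = (\<Union>a\<in>{a. a \<noteq> hzero F}. scl F n r a ` V)"
  proof (intro set_eqI iffI)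
    fix \<phi> assume "\<phi> \<in> {\<phi> \<in> N. q \<phi> \<in> q ` V}"
    then obtain \<psi> where \<phi>: "\<phi> \<in> N" and \<psi>: "\<psi> \<in> V" "q \<phi> = q \<psi>" by blast
    have "\<phi> \<in> extensional (tuples n r)" using \<phi> unfolding N_def nzvecs_iff by blast
    then obtain a where "a \<noteq> hzero F" "\<phi> = scl F n r a \<psi>"
      using class_eq_iff[OF hf] \<psi>(2) unfolding q_def by metis
    then show "\<phi> \<in> (\<Union>a\<in>{a. a \<noteq> hzero F}. scl F n r a ` V)" using \<psi>(1) by blast
  next
    fix \<phi> assume "\<phi> \<in> (\<Union>a\<in>{a. a \<noteq> hzero F}. scl F n r a ` V)"
    then obtain a \<psi> where a: "a \<noteq> hzero F" and \<psi>: "\<psi> \<in> V" and \<phi>: "\<phi> = scl F n r a \<psi>" by blast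
    have "\<phi> \<in> N" using scl_nzvecs[OF hf a] \<psi> VN \<phi> unfolding N_def by blast
    moreover have "q \<phi> = q \<psi>" using class_scl[OF hf a] \<phi> unfolding q_def by simp
    ultimately show "\<phi> \<in> {\<phi> \<in> N. q \<phi> \<in> q ` V}" using \<psi> by blast
  qed
  have "openin (nzvec_top F X n r) (\<Union>a\<in>{a. a \<noteq> hzero F}. scl F n r a ` V)"
    using scl_open[OF hf tX c _ V] by blast
  then have U: "openin (proj_top F X n r) (q ` V)"
    unfolding openin_proj_top using pre VN unfolding q_def N_def by (simp add: image_mono)
  have RN: "R \<subseteq> q ` N" using Real_sub unfolding R_def q_def N_def by blast
  have "W = q ` V \<inter> R"
  proof (intro set_eqI iffI)
    fix C assume C: "C \<in> W"
    then obtain \<phi> where \<phi>: "\<phi> \<in> N" "C = q \<phi>" using WR RN by blast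
    then have "\<phi> \<in> A" using C WR unfolding A_def by blast
    then have "\<phi> \<in> V" using TT C \<phi> unfolding V_def A_def by blast
    then show "C \<in> q ` V \<inter> R" using \<phi> C WR by blast
  next
    fix C assume "C \<in> q ` V \<inter> R"
    then obtain \<phi> where \<phi>: "\<phi> \<in> V" "C = q \<phi>" "C \<in> R" by blast
    then have "\<phi> \<in> A" using VN unfolding A_def by blast
    then have "\<phi> \<in> T \<inter> A" using \<phi> unfolding V_def by blast
    then show "C \<in> W" using TT \<phi> by blast
  qed
  then show "openin (Real_top k F X F' f n r M) W"
    unfolding Real_top_eq openin_subtopology R_def using U by blast
qed




lemma zero_pattern:
  assumes hf: "hyperfield F" and hf': "hyperfield F'" and hm: "hmorphism F F' f"
    and \<mu>: "\<mu> \<in> extensional (tuples n r)" and M: "M = gp_class F' n r \<mu>"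
    and \<phi>: "\<phi> \<in> nzvecs F n r" and R: "gp_class F n r \<phi> \<in> Real_set k F F' f n r M"
    and i: "i \<in> tuples n r"
  shows "\<phi> i = hzero F \<longleftrightarrow> \<mu> i = hzero F'"
proof -
  obtain \<psi> where \<psi>: "\<psi> \<in> gp_class F n r \<phi>" and g: "gp_class F' n r (restrict (f \<circ> \<psi>) (tuples n r)) = M"
    using R unfolding Real_set_def by blast
  obtain a where a: "a \<noteq> hzero F" "\<psi> = scl F n r a \<phi>" using \<psi> unfolding gp_class_scl by blast
  let ?g = "restrict (f \<circ> \<psi>) (tuples n r)"
  have "?g \<in> gp_class F' n r ?g" by (rule self_in_class[OF hf']) simp
  then have "?g \<in> gp_class F' n r \<mu>" using g M by simp
  then obtain b where b: "b \<noteq> hzero F'" "?g = scl F' n r b \<mu>" unfolding gp_class_scl by blast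
  have eq: "f (hmul F a (\<phi> i)) = hmul F' b (\<mu> i)"
  proof -
    have "?g i = scl F' n r b \<mu> i" using b by simp
    then show ?thesis using i a(2) unfolding scl_def by simp
  qed
  have f0: "f (hzero F) = hzero F'" using hm unfolding hmorphism_def by blast
  show ?thesis
  proof
    assume "\<phi> i = hzero F"
    then have "hmul F' b (\<mu> i) = hzero F'" using eq f0 hf_mul_zero_right[OF hf] by simp
    then show "\<mu> i = hzero F'" using hf_mul_nz[OF hf' b(1)] by blast
  next
    assume "\<mu> i = hzero F'"
    then have "f (hmul F a (\<phi> i)) = hzero F'" using eq hf_mul_zero_right[OF hf'] by simp
    then have "hmul F a (\<phi> i) = hzero F" using morph_nz[OF hf hf' hm] by blast
    then show "\<phi> i = hzero F" using hf_mul_nz[OF hf a(1)] by blast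
  qed
qed

lemma sub_eq:
  assumes A: "A \<subseteq> PiE I Z" and e: "\<And>i. subtopology X1 (Z i) = subtopology X2 (Z i)"
  shows "subtopology (product_topology (\<lambda>_. X1) I) A = subtopology (product_topology (\<lambda>_. X2) I) A"
proof -
  have "\<And>X. subtopology (product_topology (\<lambda>_. X) I) A = subtopology (product_topology (\<lambda>i. subtopology X (Z i)) I) A"
  proof -
    fix X
    have "subtopology (product_topology (\<lambda>_. X) I) A = subtopology (subtopology (product_topology (\<lambda>_. X) I) (PiE I Z)) A"
      using A by (simp add: subtopology_subtopology Int_absorb1)
    then show "subtopology (product_topology (\<lambda>_. X) I) A = subtopology (product_topology (\<lambda>i. subtopology X (Z i)) I) A"
      by (simp add: subtopology_product_topology)
  qed
  moreover have "(\<lambda>i. subtopology X1 (Z i)) = (\<lambda>i. subtopology X2 (Z i))" using e by blast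
  ultimately show ?thesis by metis
qed

lemma Real_top_same:
  fixes F :: "'a hstruct" and F' :: "'b hstruct"
  assumes hf: "hyperfield F" and hf': "hyperfield F'" and hm: "hmorphism F F' f"
    and M: "M \<in> Gr k F' n r"
    and t1: "topspace X1 = UNIV" and c1: "\<forall>a. a \<noteq> hzero F \<longrightarrow> continuous_map X1 X1 (hmul F a)"
    and t2: "topspace X2 = UNIV" and c2: "\<forall>a. a \<noteq> hzero F \<longrightarrow> continuous_map X2 X2 (hmul F a)"
    and s0: "subtopology X1 {hzero F} = subtopology X2 {hzero F}"
    and s1: "subtopology X1 (- {hzero F}) = subtopology X2 (- {hzero F})"
  shows "Real_top k F X1 F' f n r M = Real_top k F X2 F' f n r M"
proof -
  obtain \<mu> where \<mu>: "M = gp_class F' n r \<mu>" "is_gp k F' n r \<mu>" using M unfolding Gr_def by blast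
  have \<mu>e: "\<mu> \<in> extensional (tuples n r)"
    using \<mu>(2) by (cases k) (auto simp: is_gp_def strong_gp_def weak_gp_def)
  define A where "A = {\<phi> \<in> nzvecs F n r. gp_class F n r \<phi> \<in> Real_set k F F' f n r M}"
  define Z where "Z = (\<lambda>i. if \<mu> i = hzero F' then {hzero F} else - {hzero F})"
  have AZ: "A \<subseteq> PiE (tuples n r) Z"
  proof
    fix \<phi> assume "\<phi> \<in> A"
    then have \<phi>: "\<phi> \<in> nzvecs F n r" "gp_class F n r \<phi> \<in> Real_set k F F' f n r M" unfolding A_def by auto
    have "\<forall>i\<in>tuples n r. \<phi> i \<in> Z i"
      using zero_pattern[OF hf hf' hm \<mu>e \<mu>(1) \<phi>] unfolding Z_def by auto
    moreover have "\<phi> \<in> extensional (tuples n r)" using \<phi>(1) nzvecs_iff by blast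
    ultimately show "\<phi> \<in> PiE (tuples n r) Z" by (simp add: PiE_iff)
  qed
  have e: "\<And>i. subtopology X1 (Z i) = subtopology X2 (Z i)" unfolding Z_def using s0 s1 by simp
  have PP: "subtopology (product_topology (\<lambda>_. X1) (tuples n r)) A = subtopology (product_topology (\<lambda>_. X2) (tuples n r)) A"
    by (rule sub_eq[OF AZ e])
  show ?thesis
    unfolding topology_eq
    using open_Real[OF hf t1 c1, of k F' f n r M] open_Real[OF hf t2 c2, of k F' f n r M] PP
    unfolding A_def by simp
qed




lemma topspace_UNIV: "openin X UNIV \<Longrightarrow> topspace X = UNIV"
  using openin_subset by blast

lemma sub_single: "topspace X = UNIV \<Longrightarrow> openin (subtopology X {z}) U \<longleftrightarrow> U \<subseteq> {z}"
proof
  assume "openin (subtopology X {z}) U" then show "U \<subseteq> {z}" using openin_subset by fastforce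
next
  assume t: "topspace X = UNIV" and "U \<subseteq> {z}"
  then have "U = {} \<or> U = {z}" by blast
  then show "openin (subtopology X {z}) U"
  proof
    assume "U = {}" then show ?thesis by simp
  next
    assume "U = {z}"
    then have "U = UNIV \<inter> {z}" by simp
    then show ?thesis unfolding openin_subtopology using openin_topspace[of X] t by metis
  qed
qed

lemma sub_single_eq: "topspace X = UNIV \<Longrightarrow> topspace Y = UNIV \<Longrightarrow> subtopology X {z} = subtopology Y {z}"
  unfolding topology_eq by (simp add: sub_single)

lemma T_props:
  assumes th: "top_hyperfield F T" and a: "a \<noteq> hzero F"
  shows "continuous_map T T (hmul F a)"
proof -
  have m: "continuous_map (prod_topology T T) T (\<lambda>(x, y). hmul F x y)" and t: "topspace T = UNIV"
    using th unfolding top_hyperfield_def by auto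
  have "continuous_map T (prod_topology T T) (\<lambda>x. (a, x))"
    by (intro continuous_map_pairedI continuous_map_const[THEN iffD2] continuous_map_id[unfolded id_def]) (simp add: t)
  from continuous_map_compose[OF this m] show ?thesis by (simp add: o_def)
qed

lemma mul_zero_iff: "hyperfield F \<Longrightarrow> a \<noteq> hzero F \<Longrightarrow> hmul F a x = hzero F \<longleftrightarrow> x = hzero F"
  using hf_mul_nz hf_mul_zero_right by metis

lemma fine_props:
  assumes th: "top_hyperfield F T"
  shows "topspace (zero_fine F T) = UNIV"
    and "\<forall>a. a \<noteq> hzero F \<longrightarrow> continuous_map (zero_fine F T) (zero_fine F T) (hmul F a)"
    and "subtopology (zero_fine F T) (- {hzero F}) = subtopology T (- {hzero F})"
proof -
  have hf: "hyperfield F" and t: "topspace T = UNIV" and o: "openin T (- {hzero F})"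
    using th unfolding top_hyperfield_def by auto
  show tf: "topspace (zero_fine F T) = UNIV"
    by (rule topspace_UNIV) (simp add: openin_zero_fine o Diff_eq)
  show "\<forall>a. a \<noteq> hzero F \<longrightarrow> continuous_map (zero_fine F T) (zero_fine F T) (hmul F a)"
  proof (intro allI impI)
    fix a assume a: "a \<noteq> hzero F"
    have c: "continuous_map T T (hmul F a)" by (rule T_props[OF th a])
    show "continuous_map (zero_fine F T) (zero_fine F T) (hmul F a)"
      unfolding continuous_map_def
    proof (intro conjI allI impI)
      show "hmul F a \<in> topspace (zero_fine F T) \<rightarrow> topspace (zero_fine F T)" using tf by simp
    next
      fix U assume "openin (zero_fine F T) U"
      then have U: "openin T (U - {hzero F})" by (simp add: openin_zero_fine)
      have "{x \<in> topspace (zero_fine F T). hmul F a x \<in> U} - {hzero F} = {x \<in> topspace T. hmul F a x \<in> U - {hzero F}}"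
        using mul_zero_iff[OF hf a] tf t by auto
      then show "openin (zero_fine F T) {x \<in> topspace (zero_fine F T). hmul F a x \<in> U}"
        using openin_continuous_map_preimage[OF c U] by (simp add: openin_zero_fine)
    qed
  qed
  have "openin (zero_fine F T) (- {hzero F})" by (simp add: openin_zero_fine o Diff_eq)
  then show "subtopology (zero_fine F T) (- {hzero F}) = subtopology T (- {hzero F})"
    unfolding topology_eq
  proof (intro allI)
    fix S
    show "openin (subtopology (zero_fine F T) (- {hzero F})) S = openin (subtopology T (- {hzero F})) S"
    proof (cases "S \<subseteq> - {hzero F}")
      case True
      then have "S - {hzero F} = S" by blast
      then show ?thesis using True o \<open>openin (zero_fine F T) (- {hzero F})\<close>
        by (simp add: openin_open_subtopology openin_zero_fine)
    next
      case False
      then show ?thesis using o \<open>openin (zero_fine F T) (- {hzero F})\<close>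
        by (simp add: openin_open_subtopology)
    qed
  qed
qed

lemma coarse_props:
  assumes th: "top_hyperfield F T"
  shows "topspace (zero_coarse F T) = UNIV"
    and "\<forall>a. a \<noteq> hzero F \<longrightarrow> continuous_map (zero_coarse F T) (zero_coarse F T) (hmul F a)"
    and "subtopology (zero_coarse F T) (- {hzero F}) = subtopology T (- {hzero F})"
proof -
  have hf: "hyperfield F" and t: "topspace T = UNIV" and o: "openin T (- {hzero F})"
    using th unfolding top_hyperfield_def by auto
  show tf: "topspace (zero_coarse F T) = UNIV"
    by (rule topspace_UNIV) (simp add: openin_zero_coarse)
  show "\<forall>a. a \<noteq> hzero F \<longrightarrow> continuous_map (zero_coarse F T) (zero_coarse F T) (hmul F a)"
  proof (intro allI impI)
    fix a assume a: "a \<noteq> hzero F"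
    have c: "continuous_map T T (hmul F a)" by (rule T_props[OF th a])
    show "continuous_map (zero_coarse F T) (zero_coarse F T) (hmul F a)"
      unfolding continuous_map_def
    proof (intro conjI allI impI)
      show "hmul F a \<in> topspace (zero_coarse F T) \<rightarrow> topspace (zero_coarse F T)" using tf by simp
    next
      fix U assume "openin (zero_coarse F T) U"
      then have U: "U = UNIV \<or> (openin T U \<and> hzero F \<notin> U)" by (simp add: openin_zero_coarse)
      show "openin (zero_coarse F T) {x \<in> topspace (zero_coarse F T). hmul F a x \<in> U}"
      proof (cases "U = UNIV")
        case True then show ?thesis using tf by (simp add: openin_zero_coarse)
      next
        case False
        then have U: "openin T U" "hzero F \<notin> U" using U by auto
        have "{x \<in> topspace (zero_coarse F T). hmul F a x \<in> U} = {x \<in> topspace T. hmul F a x \<in> U}"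
          using tf t by simp
        moreover have "hzero F \<notin> {x \<in> topspace T. hmul F a x \<in> U}"
          using U(2) hf_mul_zero_right[OF hf] by simp
        ultimately show ?thesis
          using openin_continuous_map_preimage[OF c U(1)] by (simp add: openin_zero_coarse)
      qed
    qed
  qed
  have "openin (zero_coarse F T) (- {hzero F})" by (simp add: openin_zero_coarse o)
  then show "subtopology (zero_coarse F T) (- {hzero F}) = subtopology T (- {hzero F})"
    unfolding topology_eq using o
    by (auto simp: openin_open_subtopology openin_zero_coarse)
qed

theorem corollary5p2:
  fixes F :: "'a hstruct" and F' :: "'b hstruct" and T :: "'a topology"
    and f :: "'a \<Rightarrow> 'b" and k :: gp_kind and n r :: nat
    and M :: "(nat list \<Rightarrow> 'b) set"
  assumes "top_hyperfield F T"
    and "hyperfield F'"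
    and "hmorphism F F' f"
    and "M \<in> Gr k F' n r"
  shows "homeomorphic_map (Real_top k F (zero_fine F T) F' f n r M) (Real_top k F T F' f n r M) id
       \<and> homeomorphic_map (Real_top k F T F' f n r M) (Real_top k F (zero_coarse F T) F' f n r M) id"
proof -
  have hf: "hyperfield F" and t: "topspace T = UNIV"
    using assms(1) unfolding top_hyperfield_def by auto
  have cT: "\<forall>a. a \<noteq> hzero F \<longrightarrow> continuous_map T T (hmul F a)" using T_props[OF assms(1)] by blast
  note fp = fine_props[OF assms(1)] and cp = coarse_props[OF assms(1)]
  have 1: "Real_top k F (zero_fine F T) F' f n r M = Real_top k F T F' f n r M"
    by (rule Real_top_same[OF hf assms(2,3,4) fp(1,2) t cT sub_single_eq[OF fp(1) t] fp(3)])
  have 2: "Real_top k F (zero_coarse F T) F' f n r M = Real_top k F T F' f n r M"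
    by (rule Real_top_same[OF hf assms(2,3,4) cp(1,2) t cT sub_single_eq[OF cp(1) t] cp(3)])
  show ?thesis using 1 2 by (simp add: homeomorphic_map_id)
qed


end
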